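(* Let $\beta\in(0,1)$. Let $\mathcal R^{(\beta)}$ be a random closed subset of $[0,1]$ with capacity functional $\mathbb P(\mathcal R^{(\beta)}\cap K\neq\emptyset)=\mathrm{Leb}(K)^\beta$ for all compact $K\subset[0,1]$. Let $Q_\beta$ be an $\mathbb N$-valued random variable with \[ \mathbb P(Q_\beta=k)=\frac{\beta(1-\beta)_{(k-1)\uparrow}}{k!},\quad k\in\mathbb N, \] where $(a)_{n\uparrow}=a(a+1)\cdots(a+n-1)$ for $n\in\mathbb N$ and $(a)_{0\uparrow}=1$, and let $U_1,U_2,\dots$ be i.i.d. uniform on $(0,1)$, independent of $Q_\beta$. Then $\mathcal R^{(\beta)}\overset{d}{=}\bigcup_{i=1}^{Q_\beta}\{U_i\}$ as random closed sets of $[0,1]$.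
   Context: $\mathrm{Leb}$ is Lebesgue measure. Random closed sets are random elements of the space of closed subsets of $[0,1]$ with the Fell topology; their law is determined by the capacity functional $K\mapsto\mathbb P(R\cap K\ne\emptyset)$, $K$ compact. *)

theory Defs
  imports "HOL-Probability.Probability"
begin

definition capacity_functional :: "'a measure \<Rightarrow> ('a \<Rightarrow> real set) \<Rightarrow> real set \<Rightarrow> real" where
  "capacity_functional M R K = measure M {\<omega> \<in> space M. R \<omega> \<inter> K \<noteq> {}}"

text \<open>Two random closed subsets of [0,1] (possibly on different probability spaces) have the same
  law iff their capacity functionals agree on all compact K contained in [0,1] (Choquet).\<close>
definition same_law_rcs ::
  "'a measure \<Rightarrow> ('a \<Rightarrow> real set) \<Rightarrow> 'b measure \<Rightarrow> ('b \<Rightarrow> real set) \<Rightarrow> bool" where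
  "same_law_rcs M R N S \<longleftrightarrow>
     (\<forall>K. compact K \<and> K \<subseteq> {0..1} \<longrightarrow> capacity_functional M R K = capacity_functional N S K)"

end

theory Submission imports Defs begin


lemma coef_eq:
  fixes \<beta> :: real assumes "k \<ge> 1"
  shows "\<beta> * pochhammer (1 - \<beta>) (k - 1) / fact k = - ((\<beta> gchoose k) * (-1)^k)"
proof -
  obtain j where k: "k = Suc j" using assms by (cases k) auto
  have "(\<beta> gchoose k) * (-1)^k = pochhammer (-\<beta>) k / fact k"
    by (simp add: gbinomial_pochhammer power_mult_distrib[symmetric] flip: power_add) 
  also have "pochhammer (-\<beta>) k = (-\<beta>) * pochhammer (1 - \<beta>) (k-1)"
    unfolding k by (simp add: pochhammer_rec)
  finally show ?thesis by simp
qed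

lemma binom_series:
  fixes \<beta> s :: real assumes "0 \<le> s" "s < 1"
  shows "(\<lambda>k. (if k = 0 then 0 else \<beta> * pochhammer (1 - \<beta>) (k - 1) / fact k) * s^k)
           sums (1 - (1 - s) powr \<beta>)"
proof -
  have "(\<lambda>n. (\<beta> gchoose n) * (-s)^n) sums (1 + -s) powr \<beta>"
    by (rule gen_binomial_real) (use assms in auto)
  hence "(\<lambda>n. (if n = 0 then 1 else 0) - (\<beta> gchoose n) * (-s)^n) sums (1 - (1 - s) powr \<beta>)"
    by (intro sums_diff) (auto simp: sums_single[of 0 "\<lambda>_. 1::real", simplified])
  moreover have "(if n = 0 then 1 else 0) - (\<beta> gchoose n) * (-s)^n =
      (if n = 0 then 0 else \<beta> * pochhammer (1 - \<beta>) (n - 1) / fact n) * s^n" for n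
    using coef_eq[of n \<beta>] by (auto simp: power_minus' power_mult_distrib)
  ultimately show ?thesis by simp
qed

theorem lemma3p1:
  fixes M :: "'a measure" and \<beta> :: real
    and R :: "'a \<Rightarrow> real set" and Q :: "'a \<Rightarrow> nat" and U :: "nat \<Rightarrow> 'a \<Rightarrow> real"
  assumes "prob_space M"
    and "0 < \<beta>" and "\<beta> < 1"
    and "\<And>\<omega>. \<omega> \<in> space M \<Longrightarrow> closed (R \<omega>) \<and> R \<omega> \<subseteq> {0..1}"
    and "\<And>K. compact K \<Longrightarrow> K \<subseteq> {0..1} \<Longrightarrow> {\<omega> \<in> space M. R \<omega> \<inter> K \<noteq> {}} \<in> sets M"
    and "\<And>K. compact K \<Longrightarrow> K \<subseteq> {0..1} \<Longrightarrow>
           capacity_functional M R K = measure lborel K powr \<beta>"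
    and "Q \<in> measurable M (count_space UNIV)"
    and "\<And>k::nat. k \<ge> 1 \<Longrightarrow>
           measure M {\<omega> \<in> space M. Q \<omega> = k} = \<beta> * pochhammer (1 - \<beta>) (k - 1) / fact k"
    and "\<And>i. i \<ge> 1 \<Longrightarrow> U i \<in> borel_measurable M"
    and "\<And>i. i \<ge> 1 \<Longrightarrow> distr M borel (U i) = uniform_measure lborel {0<..<1}"
    and "prob_space.indep_vars M (\<lambda>_. borel) U {1..}"
    and "prob_space.indep_set M
           (sets (vimage_algebra (space M) Q (count_space UNIV)))
           (sets (vimage_algebra (space M) (\<lambda>\<omega>. \<lambda>i\<in>{1..}. U i \<omega>) (PiM {1..} (\<lambda>_. borel))))"
  shows "same_law_rcs M R M (\<lambda>\<omega>. \<Union>i\<in>{1..Q \<omega>}. {U i \<omega>})"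
proof -
  interpret prob_space M by fact
  note Qm = assms(7) and Qlaw = assms(8) and Um = assms(9) and Ulaw = assms(10)
    and indU = assms(11) and indQU = assms(12)
  show ?thesis unfolding same_law_rcs_def
  proof (intro allI impI, elim conjE)
    fix K :: "real set" assume K: "compact K" "K \<subseteq> {0..1}"
    define p where "p = measure lborel K"
    define s where "s = 1 - p"
    have KB: "K \<in> sets borel" using K(1) by (simp add: compact_imp_closed)
    have p01: "0 \<le> p" "p \<le> 1"
    proof -
      show "0 \<le> p" by (simp add: p_def)
      have "p \<le> measure lborel {0..1::real}" unfolding p_def
        using K(2) KB by (intro measure_mono_fmeasurable) (auto simp: fmeasurable_def)
      then show "p \<le> 1" by simp
    qed
    have PU: "prob {\<omega>\<in>space M. U i \<omega> \<in> K} = p" if i: "i \<ge> 1" for i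
    proof -
      have "prob {\<omega>\<in>space M. U i \<omega> \<in> K} = measure (distr M borel (U i)) K"
        using Um[OF i] KB by (subst measure_distr) (simp_all add: Int_def conj_commute)
      also have "\<dots> = measure lborel ({0<..<1} \<inter> K) / measure lborel {0<..<1::real}"
        unfolding Ulaw[OF i] using KB by (subst measure_uniform_measure) auto
      also have "\<dots> = measure lborel ({0<..<1} \<inter> K)" by simp
      also have "\<dots> = measure lborel (({0<..<1} \<inter> K) \<union> (K \<inter> {0,1}))"
        using KB by (intro measure_Un_null_set[symmetric] finite_imp_null_set_lborel) auto
      also have "({0<..<1} \<inter> K) \<union> (K \<inter> {0,1}) = K" using K(2) by auto
      finally show ?thesis by (simp add: p_def)
    qed
    have PUc: "prob {\<omega>\<in>space M. U i \<omega> \<notin> K} = s" if i: "i \<ge> 1" for i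
    proof -
      have "U i -` K \<inter> space M \<in> events" using Um[OF i] KB by (rule measurable_sets)
      moreover have "U i -` K \<inter> space M = {\<omega>\<in>space M. U i \<omega> \<in> K}" by auto
      ultimately have ev: "{\<omega>\<in>space M. U i \<omega> \<in> K} \<in> events" by simp
      have "{\<omega>\<in>space M. U i \<omega> \<notin> K} = space M - {\<omega>\<in>space M. U i \<omega> \<in> K}" by auto
      then show ?thesis using finite_measure_compl[OF ev] PU[OF i] prob_space by (simp add: s_def)
    qed

    define F where "F = (\<lambda>\<omega>. \<lambda>i\<in>{1::nat..}. U i \<omega>)"
    define VQ where "VQ = sets (vimage_algebra (space M) Q (count_space UNIV))"
    define VU where "VU = sets (vimage_algebra (space M) F (PiM {1::nat..} (\<lambda>_. borel::real measure)))"
    have indQU': "indep_set VQ VU" using indQU unfolding VQ_def VU_def F_def .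
    define A where "A k = {\<omega>\<in>space M. Q \<omega> = k}" for k
    define B where "B k = {\<omega>\<in>space M. \<forall>i\<in>{1..k}. U i \<omega> \<notin> K}" for k
    define c where "c k = prob (A k)" for k
    have AV: "A k \<in> VQ" for k
    proof -
      have "Q -` {k} \<inter> space M \<in> VQ" unfolding VQ_def by (rule in_vimage_algebra) simp
      moreover have "Q -` {k} \<inter> space M = A k" by (auto simp: A_def)
      ultimately show ?thesis by simp
    qed
    have BV: "B k \<in> VU" for k
    proof -
      define S where "S = {f \<in> space (PiM {1::nat..} (\<lambda>_. borel::real measure)). \<forall>i\<in>{1..k}. f i \<notin> K}"
      have "S \<in> sets (PiM {1::nat..} (\<lambda>_. borel::real measure))"
      proof (cases "k = 0")
        case True then show ?thesis by (simp add: S_def)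
      next
        case False
        have "S = (\<Inter>i\<in>{1..k}. (\<lambda>f. f i) -` (UNIV - K) \<inter> space (PiM {1::nat..} (\<lambda>_. borel::real measure)))"
          using False by (auto simp: S_def)
        also have "\<dots> \<in> sets (PiM {1::nat..} (\<lambda>_. borel::real measure))"
          using False KB by (intro sets.finite_INT ballI measurable_sets[OF measurable_component_singleton]) auto
        finally show ?thesis .
      qed
      then have "F -` S \<inter> space M \<in> VU" unfolding VU_def by (rule in_vimage_algebra)
      moreover have "F -` S \<inter> space M = B k" 
        by (auto simp: S_def B_def F_def space_PiM)
      ultimately show ?thesis by simp
    qed
    have Aev: "A k \<in> events" for k using AV indep_setD_ev1[OF indQU'] by auto
    have Bev: "B k \<in> events" for k using BV indep_setD_ev2[OF indQU'] by auto
    have PB: "prob (B k) = s ^ k" for k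
    proof (cases "k = 0")
      case True
      then have "B k = space M" by (auto simp: B_def)
      then show ?thesis using True prob_space by simp
    next
      case False
      define Kc where "Kc = UNIV - K"
      have KcB: "Kc \<in> sets borel" using KB by (auto simp: Kc_def)
      define C where "C i = U i -` Kc \<inter> space M" for i
      have "indep_sets (\<lambda>i. { U i -` X \<inter> space M | X. X \<in> sets (borel::real measure)}) {1..}"
        using indU unfolding indep_vars_def2 by simp
      then have "prob (\<Inter>i\<in>{1..k}. C i) = (\<Prod>i\<in>{1..k}. prob (C i))"
        using False KcB by (intro indep_setsD) (auto simp: C_def)
      moreover have "(\<Inter>i\<in>{1..k}. C i) = B k" using False by (auto simp: C_def B_def Kc_def)
      moreover have "prob (C i) = s" if "i \<in> {1..k}" for i
      proof -
        have "C i = {\<omega>\<in>space M. U i \<omega> \<notin> K}" by (auto simp: C_def Kc_def)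
        then show ?thesis using PUc[of i] that by simp
      qed
      ultimately show ?thesis by simp
    qed
    define E where "E k = A k \<inter> B k" for k
    have PE: "prob (E k) = c k * s ^ k" for k
      unfolding E_def c_def using indep_setD[OF indQU' AV BV] PB by simp
    have disjE: "disjoint_family E" unfolding disjoint_family_on_def E_def A_def by auto
    have disjA: "disjoint_family A" unfolding disjoint_family_on_def A_def by auto
    have sumsE: "(\<lambda>k. c k * s ^ k) sums prob (\<Union>k. E k)"
      using finite_measure_UNION[OF _ disjE] Aev Bev PE by (auto simp: E_def)
    have "(\<lambda>k. c k) sums prob (\<Union>k. A k)"
      using finite_measure_UNION[OF _ disjA] Aev by (auto simp: c_def)
    moreover have "(\<Union>k. A k) = space M" by (auto simp: A_def)
    ultimately have sumsA: "(\<lambda>k. c k) sums 1" using prob_space by simp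
    define d where "d k = (if k = 0 then 0 else \<beta> * pochhammer (1 - \<beta>) (k - 1) / fact k)" for k
    have cd1: "c k = d k" if "k \<noteq> 0" for k
      using Qlaw[of k] that by (simp add: c_def d_def A_def)
    have d00: "d 0 = 0" by (simp add: d_def)
    have "(\<lambda>k. c k - (if k = 0 then c 0 else 0)) sums (1 - c 0)"
      using sums_diff[OF sumsA sums_single[of 0 "\<lambda>_. c 0"]] by simp
    moreover have "(\<lambda>k. c k - (if k = 0 then c 0 else 0)) = d"
      by (rule ext) (simp add: cd1 d00)
    ultimately have sumsd: "d sums (1 - c 0)" by simp
    have d0: "d k \<ge> 0" for k by (cases "k = 0") (auto simp: d00 simp flip: cd1 simp add: c_def)
    have c0le: "c 0 \<le> (1 - t) powr \<beta>" if t: "0 \<le> t" "t < 1" for t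
    proof -
      have "1 - (1 - t) powr \<beta> \<le> 1 - c 0"
      proof (rule sums_le[OF _ binom_series[OF t, of \<beta>] sumsd[unfolded d_def]])
        fix k show "(if k = 0 then 0 else \<beta> * pochhammer (1 - \<beta>) (k - 1) / fact k) * t ^ k
           \<le> (if k = 0 then 0 else \<beta> * pochhammer (1 - \<beta>) (k - 1) / fact k)"
        proof -
          have "0 \<le> t^k" "t^k \<le> 1" using t by (auto intro: power_le_one)
          then show ?thesis using mult_right_le_one_le[OF d0[of k, unfolded d_def]] by blast
        qed
      qed
      then show ?thesis by simp
    qed
    have c00: "c 0 = 0"
    proof (rule ccontr)
      assume "c 0 \<noteq> 0"
      then have cpos: "c 0 > 0" by (simp add: c_def order_less_le)
      have cle1: "c 0 \<le> 1" by (simp add: c_def)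
      define x where "x = (c 0 / 2) powr (1 / \<beta>)"
      have x0: "0 < x" using cpos by (simp add: x_def)
      have x1: "x \<le> 1" unfolding x_def using cpos cle1 assms(2) by (intro powr_le1) auto
      have "x powr \<beta> = c 0 / 2" unfolding x_def using assms(2) cpos by (simp add: powr_powr)
      with c0le[of "1 - x"] x0 x1 cpos show False by simp
    qed
    have "prob (\<Union>k. E k) = 1 - p powr \<beta>"
    proof (cases "p = 0")
      case True
      then have "s = 1" by (simp add: s_def)
      then have "(\<lambda>k. c k * s ^ k) = c" by simp
      then have "prob (\<Union>k. E k) = 1" using sums_unique2[OF sumsE] sumsA by simp
      then show ?thesis using True assms(2) by simp
    next
      case False
      then have "0 \<le> s" "s < 1" using p01 by (auto simp: s_def)
      from binom_series[OF this, of \<beta>] have "(\<lambda>k. d k * s ^ k) sums (1 - (1 - s) powr \<beta>)"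
        by (simp add: d_def)
      moreover have "(\<lambda>k. d k * s ^ k) = (\<lambda>k. c k * s ^ k)"
        by (rule ext) (metis c00 cd1 d00)
      ultimately show ?thesis using sums_unique2[OF sumsE] by (simp add: s_def)
    qed
    moreover have "{\<omega> \<in> space M. (\<Union>i\<in>{1..Q \<omega>}. {U i \<omega>}) \<inter> K \<noteq> {}} = space M - (\<Union>k. E k)"
      by (auto simp: E_def A_def B_def)
    moreover have "(\<Union>k. E k) \<in> events" using Aev Bev by (auto simp: E_def)
    ultimately have "capacity_functional M (\<lambda>\<omega>. \<Union>i\<in>{1..Q \<omega>}. {U i \<omega>}) K = p powr \<beta>"
      unfolding capacity_functional_def using finite_measure_compl prob_space by simp
    then show "capacity_functional M R K = capacity_functional M (\<lambda>\<omega>. \<Union>i\<in>{1..Q \<omega>}. {U i \<omega>}) K"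
      using assms(6)[OF K] by (simp add: p_def)
  qed
qed

end
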